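(* Let $P_n(x)$ be a real polynomial all of whose roots are real, with $m\ge 3$ distinct roots $p_1<\dots<p_m$. Let $\mu=\min_{i\ne j}|p_i-p_j|$ and $M=\max_{i,j}|p_i-p_j|$. Define $$\mu_0^2=\Big[\sum_{1\le i<j\le m}(p_i-p_j)^{-2}\Big]^{-1},\qquad \mu_k^2=\Big(\sum_{1\le i<j\le m}\frac{1}{(p_i-p_j)^2-\mu_{k-1}^2}\Big)^{-1}+\mu_{k-1}^2\ (k\ge1),$$ $$M_0^2=\sum_{1\le i<j\le m}(p_j-p_i)^2,\qquad M_k^2=\Big(\sum_{1\le i<j\le m}\frac{1}{(p_i-p_j)^2-M_{k-1}^2}\Big)^{-1}+M_{k-1}^2\ (k\ge1).$$ Then these are well defined with $0<\mu_k<\mu$ and $M_k>M$ for all $k\ge0$, and each $\mu_k^2$ and each $M_k^2$ ($k=0,1,2,\dots$) can be expressed as a rational function of the coefficients of $P_n(x)$. *)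

theory Defs
  imports Complex_Main "HOL-Computational_Algebra.Polynomial"
begin

definition all_roots_real :: "real poly \<Rightarrow> bool" where
  "all_roots_real P \<longleftrightarrow> P \<noteq> 0 \<and>
     (\<forall>z. poly (map_poly complex_of_real P) z = 0 \<longrightarrow> z \<in> \<real>)"

text \<open>Index pairs i < j among 0..m-1 (the paper's 1 \<le> i < j \<le> m, shifted by one).\<close>
definition pairs :: "nat \<Rightarrow> (nat \<times> nat) set" where
  "pairs m = {(i, j). i < j \<and> j < m}"

fun musq :: "nat \<Rightarrow> (nat \<Rightarrow> real) \<Rightarrow> nat \<Rightarrow> real" where
  "musq m p 0 = inverse (\<Sum>(i, j)\<in>pairs m. inverse ((p i - p j)^2))"
| "musq m p (Suc k) =
     inverse (\<Sum>(i, j)\<in>pairs m. inverse ((p i - p j)^2 - musq m p k)) + musq m p k"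

fun Msq :: "nat \<Rightarrow> (nat \<Rightarrow> real) \<Rightarrow> nat \<Rightarrow> real" where
  "Msq m p 0 = (\<Sum>(i, j)\<in>pairs m. (p j - p i)^2)"
| "Msq m p (Suc k) =
     inverse (\<Sum>(i, j)\<in>pairs m. inverse ((p i - p j)^2 - Msq m p k)) + Msq m p k"

datatype rexp = RVar nat | RConst real | RAdd rexp rexp | RMul rexp rexp | RNeg rexp | RInv rexp

text \<open>Evaluation; None if some denominator vanishes (expression undefined at this point).\<close>
fun reval :: "rexp \<Rightarrow> (nat \<Rightarrow> real) \<Rightarrow> real option" where
  "reval (RVar i) v = Some (v i)"
| "reval (RConst c) v = Some c"
| "reval (RAdd a b) v = (case (reval a v, reval b v) of (Some x, Some y) \<Rightarrow> Some (x + y) | _ \<Rightarrow> None)"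
| "reval (RMul a b) v = (case (reval a v, reval b v) of (Some x, Some y) \<Rightarrow> Some (x * y) | _ \<Rightarrow> None)"
| "reval (RNeg a) v = map_option uminus (reval a v)"
| "reval (RInv a) v = (case reval a v of Some x \<Rightarrow> if x = 0 then None else Some (inverse x) | None \<Rightarrow> None)"

end

theory Submission
  imports Defs "Jordan_Normal_Form.Determinant" "HOL-Computational_Algebra.Fundamental_Theorem_Algebra"
begin


definition rep :: "(real poly \<Rightarrow> (nat \<Rightarrow> real) \<Rightarrow> bool) \<Rightarrow> (real poly \<Rightarrow> (nat \<Rightarrow> real) \<Rightarrow> real) \<Rightarrow> bool" where
  "rep D f \<longleftrightarrow> (\<exists>R. \<forall>Q q. D Q q \<longrightarrow> reval R (coeff Q) = Some (f Q q))"

lemma rep_const: "rep D (\<lambda>Q q. c)"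
  unfolding rep_def by (rule exI[of _ "RConst c"]) simp

lemma rep_coeff: "rep D (\<lambda>Q q. coeff Q i)"
  unfolding rep_def by (rule exI[of _ "RVar i"]) simp

lemma rep_add: "rep D f \<Longrightarrow> rep D g \<Longrightarrow> rep D (\<lambda>Q q. f Q q + g Q q)"
  unfolding rep_def
proof (elim exE)
  fix R1 R2 assume "\<forall>Q q. D Q q \<longrightarrow> reval R1 (coeff Q) = Some (f Q q)" "\<forall>Q q. D Q q \<longrightarrow> reval R2 (coeff Q) = Some (g Q q)"
  then show "\<exists>R. \<forall>Q q. D Q q \<longrightarrow> reval R (coeff Q) = Some (f Q q + g Q q)"
    by (intro exI[of _ "RAdd R1 R2"]) auto
qed

lemma rep_mult: "rep D f \<Longrightarrow> rep D g \<Longrightarrow> rep D (\<lambda>Q q. f Q q * g Q q)"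
  unfolding rep_def
proof (elim exE)
  fix R1 R2 assume "\<forall>Q q. D Q q \<longrightarrow> reval R1 (coeff Q) = Some (f Q q)" "\<forall>Q q. D Q q \<longrightarrow> reval R2 (coeff Q) = Some (g Q q)"
  then show "\<exists>R. \<forall>Q q. D Q q \<longrightarrow> reval R (coeff Q) = Some (f Q q * g Q q)"
    by (intro exI[of _ "RMul R1 R2"]) auto
qed

lemma rep_uminus: "rep D f \<Longrightarrow> rep D (\<lambda>Q q. - f Q q)"
  unfolding rep_def
proof (elim exE)
  fix R1 assume "\<forall>Q q. D Q q \<longrightarrow> reval R1 (coeff Q) = Some (f Q q)"
  then show "\<exists>R. \<forall>Q q. D Q q \<longrightarrow> reval R (coeff Q) = Some (- f Q q)"
    by (intro exI[of _ "RNeg R1"]) auto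
qed

lemma rep_diff: "rep D f \<Longrightarrow> rep D g \<Longrightarrow> rep D (\<lambda>Q q. f Q q - g Q q)"
  using rep_add[of D f "\<lambda>Q q. - g Q q"] rep_uminus[of D g] by simp

lemma rep_inverse: "rep D f \<Longrightarrow> (\<And>Q q. D Q q \<Longrightarrow> f Q q \<noteq> 0) \<Longrightarrow> rep D (\<lambda>Q q. inverse (f Q q))"
  unfolding rep_def
proof (elim exE)
  fix R1 assume "\<forall>Q q. D Q q \<longrightarrow> reval R1 (coeff Q) = Some (f Q q)" and nz: "\<And>Q q. D Q q \<Longrightarrow> f Q q \<noteq> 0"
  then show "\<exists>R. \<forall>Q q. D Q q \<longrightarrow> reval R (coeff Q) = Some (inverse (f Q q))"
    by (intro exI[of _ "RInv R1"]) auto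
qed

lemma rep_divide: "rep D f \<Longrightarrow> rep D g \<Longrightarrow> (\<And>Q q. D Q q \<Longrightarrow> g Q q \<noteq> 0) \<Longrightarrow> rep D (\<lambda>Q q. f Q q / g Q q)"
  using rep_mult[OF _ rep_inverse, of D f g] by (simp add: divide_inverse)

lemma rep_cong: "rep D g \<Longrightarrow> (\<And>Q q. D Q q \<Longrightarrow> f Q q = g Q q) \<Longrightarrow> rep D f"
  unfolding rep_def by auto

lemma rep_sum: "finite S \<Longrightarrow> (\<And>x. x \<in> S \<Longrightarrow> rep D (f x)) \<Longrightarrow> rep D (\<lambda>Q q. \<Sum>x\<in>S. f x Q q)"
proof (induction S rule: finite_induct)
  case empty then show ?case using rep_const[of D 0] by simp
next
  case (insert a S)
  have "rep D (\<lambda>Q q. f a Q q + (\<Sum>x\<in>S. f x Q q))"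
    by (rule rep_add) (use insert in auto)
  then show ?case using insert by simp
qed

lemma rep_prod: "finite S \<Longrightarrow> (\<And>x. x \<in> S \<Longrightarrow> rep D (f x)) \<Longrightarrow> rep D (\<lambda>Q q. \<Prod>x\<in>S. f x Q q)"
proof (induction S rule: finite_induct)
  case empty then show ?case using rep_const[of D 1] by simp
next
  case (insert a S)
  have "rep D (\<lambda>Q q. f a Q q * (\<Prod>x\<in>S. f x Q q))"
    by (rule rep_mult) (use insert in auto)
  then show ?case using insert by simp
qed

lemma rep_power: "rep D f \<Longrightarrow> rep D (\<lambda>Q q. f Q q ^ k)"
  using rep_prod[of "{..<k}" D "\<lambda>_. f"] by simp

lemma rep_det:
  assumes "\<And>i j. i < n \<Longrightarrow> j < n \<Longrightarrow> rep D (\<lambda>Q q. M Q q i j)"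
  shows "rep D (\<lambda>Q q. det (mat n n (\<lambda>(i,j). M Q q i j)))"
proof -
  have "rep D (\<lambda>Q q. \<Sum>p\<in>{p. p permutes {0..<n}}. signof p * (\<Prod>i = 0..<n. M Q q i (p i)))"
    apply (rule rep_sum)
     apply (simp add: finite_permutations)
    apply (rule rep_mult[OF rep_const])
    apply (rule rep_prod, simp)
    using assms permutes_in_image by fastforce
  moreover have "det (mat n n (\<lambda>(i,j). M Q q i j)) = (\<Sum>p\<in>{p. p permutes {0..<n}}. signof p * (\<Prod>i = 0..<n. M Q q i (p i)))" for Q q
    apply (subst det_def'[of _ n], simp)
    apply (rule sum.cong, simp)
    apply (rule arg_cong[where f="\<lambda>x. _ * x"])
    apply (rule prod.cong, simp)
    using permutes_in_image by fastforce
  ultimately show ?thesis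
    by (rule rep_cong)
qed



lemma mat_delete_mat: "mat_delete (mat n n f) i l = mat (n-1) (n-1) (\<lambda>(i',j'). f (if i' < i then i' else Suc i', if j' < l then j' else Suc j'))"
  unfolding mat_delete_def by (rule eq_matI) auto

lemma rep_cofactor:
  assumes "\<And>i j. i < n \<Longrightarrow> j < n \<Longrightarrow> rep D (\<lambda>Q q. M Q q i j)"
  shows "rep D (\<lambda>Q q. cofactor (mat n n (\<lambda>(i,j). M Q q i j)) a b)"
proof -
  have "rep D (\<lambda>Q q. (-1)^(a+b) * det (mat (n-1) (n-1) (\<lambda>(i',j'). M Q q (if i' < a then i' else Suc i') (if j' < b then j' else Suc j'))))"
    by (rule rep_mult[OF rep_const rep_det]) (rule assms; auto)
  then show ?thesis
    by (rule rep_cong) (simp add: cofactor_def mat_delete_mat case_prod_unfold)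
qed

lemma rep_lsq:
  fixes A :: "real poly \<Rightarrow> (nat\<Rightarrow>real) \<Rightarrow> nat \<Rightarrow> nat \<Rightarrow> real"
  assumes rA: "\<And>i j. i<r \<Longrightarrow> j<c \<Longrightarrow> rep D (\<lambda>Q q. A Q q i j)"
   and rb: "\<And>i. i<r \<Longrightarrow> rep D (\<lambda>Q q. b Q q i)"
   and sol: "\<And>Q q i. D Q q \<Longrightarrow> i<r \<Longrightarrow> (\<Sum>j<c. A Q q i j * z Q q j) = b Q q i"
   and inj: "\<And>Q q v j. D Q q \<Longrightarrow> (\<And>i. i<r \<Longrightarrow> (\<Sum>j<c. A Q q i j * v j) = 0) \<Longrightarrow> j<c \<Longrightarrow> v j = 0"
   and l: "l < c"
  shows "rep D (\<lambda>Q q. z Q q l)"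
proof -
  define g where "g Q q i j = (\<Sum>k<r. A Q q k i * A Q q k j)" for Q q i j
  define G where "G Q q = mat c c (\<lambda>(i,j). g Q q i j)" for Q q
  define h where "h Q q i = (\<Sum>k<r. A Q q k i * b Q q k)" for Q q i
  have Gc: "G Q q \<in> carrier_mat c c" for Q q unfolding G_def by simp
  have Gv: "(G Q q *\<^sub>v v) $ i = (\<Sum>j<c. g Q q i j * v $ j)" if "i < c" "v \<in> carrier_vec c" for Q q v i
    using that unfolding G_def by (auto simp: scalar_prod_def row_def atLeast0LessThan intro!: sum.cong)
  have detnz: "det (G Q q) \<noteq> 0" if D: "D Q q" for Q q
  proof
    assume "det (G Q q) = 0"
    then obtain v where v: "v \<in> carrier_vec c" "v \<noteq> 0\<^sub>v c" "G Q q *\<^sub>v v = 0\<^sub>v c"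
      using det_0_iff_vec_prod_zero[OF Gc] by blast
    have e: "(\<Sum>j<c. g Q q i j * v $ j) = 0" if "i < c" for i
      using v Gv[OF that v(1)] that by (metis index_zero_vec(1))
    have "0 = (\<Sum>i<c. v $ i * (\<Sum>j<c. g Q q i j * v $ j))" using e by simp
    also have "\<dots> = (\<Sum>i<c. \<Sum>j<c. \<Sum>k<r. (A Q q k i * v $ i) * (A Q q k j * v $ j))"
      unfolding g_def sum_distrib_left sum_distrib_right by (simp add: ac_simps)
    also have "\<dots> = (\<Sum>k<r. \<Sum>i<c. \<Sum>j<c. (A Q q k i * v $ i) * (A Q q k j * v $ j))"
      by (rule trans[OF sum.cong[OF refl sum.swap] sum.swap])
    also have "\<dots> = (\<Sum>k<r. (\<Sum>i<c. A Q q k i * v $ i)^2)"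
      by (simp add: power2_eq_square sum_product)
    finally have "(\<Sum>k<r. (\<Sum>i<c. A Q q k i * v $ i)^2) = 0" by simp
    then have z: "(\<Sum>i<c. A Q q k i * v $ i) = 0" if "k < r" for k
      using that by (subst (asm) sum_nonneg_eq_0_iff) auto
    have "v = 0\<^sub>v c"
      by (rule eq_vecI) (use v(1) inj[OF D z] in auto)
    with v show False by simp
  qed
  have key: "det (G Q q) * z Q q l = (\<Sum>i<c. cofactor (G Q q) i l * h Q q i)" if D: "D Q q" for Q q
  proof -
    define w where "w = vec c (z Q q)"
    have wc: "w \<in> carrier_vec c" unfolding w_def by simp
    have Gw: "G Q q *\<^sub>v w = vec c (h Q q)"
    proof (rule eq_vecI)
      fix i assume i: "i < dim_vec (vec c (h Q q))"
      then have "(G Q q *\<^sub>v w) $ i = (\<Sum>j<c. g Q q i j * z Q q j)" using Gv[OF _ wc] by (simp add: w_def)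
      also have "\<dots> = (\<Sum>k<r. A Q q k i * (\<Sum>j<c. A Q q k j * z Q q j))"
        unfolding g_def sum_distrib_right sum_distrib_left by (subst sum.swap) (simp add: algebra_simps)
      also have "\<dots> = h Q q i" unfolding h_def using sol[OF D] by simp
      finally show "(G Q q *\<^sub>v w) $ i = vec c (h Q q) $ i" using i by simp
    qed (simp add: G_def)
    have "det (G Q q) * z Q q l = ((det (G Q q) \<cdot>\<^sub>m 1\<^sub>m c) *\<^sub>v w) $ l"
      using l by (simp add: w_def)
    also have "\<dots> = ((adj_mat (G Q q) * G Q q) *\<^sub>v w) $ l" using adj_mat(3)[OF Gc] by simp
    also have "\<dots> = (adj_mat (G Q q) *\<^sub>v vec c (h Q q)) $ l"
      using assoc_mult_mat_vec[OF adj_mat(1)[OF Gc] Gc wc] Gw by simp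
    also have "\<dots> = (\<Sum>i<c. cofactor (G Q q) i l * h Q q i)"
      using l by (simp add: adj_mat_def scalar_prod_def row_def G_def atLeast0LessThan)
    finally show ?thesis .
  qed
  have rg: "rep D (\<lambda>Q q. g Q q i j)" if "i < c" "j < c" for i j
    unfolding g_def by (rule rep_sum, simp, rule rep_mult) (use rA that in auto)
  have "rep D (\<lambda>Q q. (\<Sum>i<c. cofactor (G Q q) i l * h Q q i) / det (G Q q))"
    unfolding G_def h_def
    apply (rule rep_divide)
      apply (rule rep_sum, simp)
      apply (rule rep_mult)
       apply (rule rep_cofactor, rule rg, assumption+)
      apply (rule rep_sum, simp, rule rep_mult)
    using rA rb apply auto[2]
     apply (rule rep_det, rule rg, assumption+)
    using detnz unfolding G_def by auto
  then show ?thesis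
    by (rule rep_cong) (use key detnz in \<open>auto simp: field_simps\<close>)
qed



lemma coeff_quot_linear:
  fixes p h :: "real poly"
  assumes ph: "p = [:-c,1:] * h"
  shows "coeff h k = (\<Sum>l = Suc k..degree p. coeff p l * c^(l - Suc k))"
proof (induction "degree p - k" arbitrary: k)
  case 0
  show ?case
  proof (cases "h = 0")
    case True then show ?thesis using ph by simp
  next
    case False
    have "degree ([:-c,1:] * h) = degree [:-c,1:] + degree h" by (rule degree_mult_eq) (use False in auto)
    then have "degree p = Suc (degree h)" using ph by simp
    then show ?thesis using 0 by (simp add: coeff_eq_0)
  qed
next
  case (Suc d)
  then have k: "Suc k \<le> degree p" by simp
  have rec: "coeff p (Suc k) = coeff h k - c * coeff h (Suc k)"
    unfolding ph by (simp add: coeff_pCons mult_poly_0_left algebra_simps) 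
  have IH: "coeff h (Suc k) = (\<Sum>l = Suc (Suc k)..degree p. coeff p l * c^(l - Suc (Suc k)))"
    using Suc by simp
  have "(\<Sum>l = Suc k..degree p. coeff p l * c^(l - Suc k)) = coeff p (Suc k) + (\<Sum>l = Suc (Suc k)..degree p. coeff p l * c^(l - Suc k))"
    using k by (simp add: sum.atLeast_Suc_atMost)
  also have "(\<Sum>l = Suc (Suc k)..degree p. coeff p l * c^(l - Suc k)) = c * coeff h (Suc k)"
    unfolding IH sum_distrib_left
    by (rule sum.cong) (auto simp: Suc_diff_Suc[symmetric] Suc_diff_le algebra_simps)
  finally show ?case using rec by simp
qed

definition "GG I x = (\<Prod>i\<in>I. [:-x i, 1:])"
definition "PS I x s = (\<Sum>i\<in>I. x i ^ s)"

context
  fixes I :: "'i set" and x :: "'i \<Rightarrow> real"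
  assumes finI: "finite I"
begin


lemma GG_degree: "degree (GG I x) = card I"
  unfolding GG_def by (subst degree_prod_sum_eq) auto

lemma GG_lead: "coeff (GG I x) (card I) = 1"
  using lead_coeff_prod[of "\<lambda>i. [:-x i, 1:]" I] unfolding GG_def[symmetric] GG_degree by simp

lemma GG_high: "l > card I \<Longrightarrow> coeff (GG I x) l = 0"
  using GG_degree by (simp add: coeff_eq_0)

lemma newton1:
  assumes k: "k < card I"
  shows "of_nat (Suc k) * coeff (GG I x) (Suc k) = (\<Sum>l = Suc k..card I. coeff (GG I x) l * (PS I x) (l - Suc k))"
proof -
  have "pderiv (GG I x) = (\<Sum>i\<in>I. (\<Prod>j\<in>I - {i}. [:-x j, 1:]))"
    unfolding GG_def pderiv_prod by (simp add: pderiv_pCons)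
  then have "of_nat (Suc k) * coeff (GG I x) (Suc k) = (\<Sum>i\<in>I. coeff (\<Prod>j\<in>I - {i}. [:-x j, 1:]) k)"
    by (metis coeff_pderiv coeff_sum)
  also have "\<dots> = (\<Sum>i\<in>I. \<Sum>l = Suc k..card I. coeff (GG I x) l * x i^(l - Suc k))"
  proof (rule sum.cong[OF refl])
    fix i assume i: "i \<in> I"
    have "(GG I x) = [:-x i, 1:] * (\<Prod>j\<in>I - {i}. [:-x j, 1:])"
      unfolding GG_def using i finI by (simp add: prod.remove)
    from coeff_quot_linear[OF this] show "coeff (\<Prod>j\<in>I - {i}. [:-x j, 1:]) k = (\<Sum>l = Suc k..card I. coeff (GG I x) l * x i^(l - Suc k))"
      by (simp add: GG_degree)
  qed
  also have "\<dots> = (\<Sum>l = Suc k..card I. coeff (GG I x) l * (PS I x) (l - Suc k))"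
    unfolding PS_def sum_distrib_left by (rule sum.swap)
  finally show ?thesis .
qed

lemma newton2: "(\<Sum>l = 0..card I. coeff (GG I x) l * (PS I x) (l + t)) = 0"
proof -
  have "(\<Sum>l = 0..card I. coeff (GG I x) l * (PS I x) (l + t)) = (\<Sum>i\<in>I. x i ^ t * poly (GG I x) (x i))"
    unfolding PS_def poly_altdef GG_degree sum_distrib_left
    by (subst sum.swap) (auto intro!: sum.cong simp: power_add atLeast0AtMost ac_simps)
  also have "\<dots> = 0"
    by (rule sum.neutral) (auto simp: GG_def poly_prod finI)
  finally show ?thesis .
qed

end



lemma PS_0: "PS I (x::_\<Rightarrow>real) 0 = of_nat (card I)" unfolding PS_def by simp

lemma PS_rec_low:
  fixes x :: "'i \<Rightarrow> real"
  assumes finI: "finite I" and s: "0 < s" "s < card I"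
  shows "PS I x s = of_nat (card I - s) * coeff (GG I x) (card I - s) - (\<Sum>l = card I - s..<card I. coeff (GG I x) l * PS I x (l - (card I - s)))"
proof -
  have k: "card I - s - 1 < card I" and sk: "Suc (card I - s - 1) = card I - s" using s by auto
  have "of_nat (card I - s) * coeff (GG I x) (card I - s) = (\<Sum>l = card I - s..card I. coeff (GG I x) l * PS I x (l - (card I - s)))"
    using newton1[OF finI k] unfolding sk by simp
  also have "\<dots> = (\<Sum>l = card I - s..<card I. coeff (GG I x) l * PS I x (l - (card I - s))) + PS I x s"
    using s by (simp add: atLeastLessThanSuc_atLeastAtMost[symmetric] GG_lead[OF finI])
  finally show ?thesis by simp
qed

lemma PS_rec_high:
  fixes x :: "'i \<Rightarrow> real"
  assumes finI: "finite I" and s: "card I \<le> s"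
  shows "PS I x s = - (\<Sum>l<card I. coeff (GG I x) l * PS I x (l + (s - card I)))"
proof -
  have "0 = (\<Sum>l = 0..card I. coeff (GG I x) l * PS I x (l + (s - card I)))"
    using newton2[OF finI, of x "s - card I"] by simp
  also have "\<dots> = (\<Sum>l<card I. coeff (GG I x) l * PS I x (l + (s - card I))) + PS I x s"
    using s by (simp add: atLeastLessThanSuc_atLeastAtMost[symmetric] GG_lead[OF finI] lessThan_atLeast0)
  finally show ?thesis by simp
qed

lemma GG_rec_mid:
  fixes x :: "'i \<Rightarrow> real"
  assumes finI: "finite I" and l: "0 < l" "l < card I"
  shows "coeff (GG I x) l = (\<Sum>l' = Suc l..card I. coeff (GG I x) l' * PS I x (l' - l)) / (of_nat l - of_nat (card I))"
proof -
  have k: "l - 1 < card I" and sk: "Suc (l - 1) = l" using l by auto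
  have "of_nat l * coeff (GG I x) l = (\<Sum>l' = l..card I. coeff (GG I x) l' * PS I x (l' - l))"
    using newton1[OF finI k] unfolding sk by simp
  also have "\<dots> = coeff (GG I x) l * of_nat (card I) + (\<Sum>l' = Suc l..card I. coeff (GG I x) l' * PS I x (l' - l))"
    using l by (simp add: sum.atLeast_Suc_atMost PS_0)
  finally have "coeff (GG I x) l * (of_nat l - of_nat (card I)) = (\<Sum>l' = Suc l..card I. coeff (GG I x) l' * PS I x (l' - l))"
    by (simp add: algebra_simps)
  moreover have "(of_nat l - of_nat (card I) :: real) \<noteq> 0" using l by simp
  ultimately show ?thesis by (simp add: field_simps)
qed

lemma GG_rec_0:
  fixes x :: "'i \<Rightarrow> real"
  assumes finI: "finite I" and N: "0 < card I"
  shows "coeff (GG I x) 0 = - (\<Sum>l = Suc 0..card I. coeff (GG I x) l * PS I x l) / of_nat (card I)"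
proof -
  have "0 = (\<Sum>l = 0..card I. coeff (GG I x) l * PS I x l)"
    using newton2[OF finI, of x 0] by simp
  also have "\<dots> = coeff (GG I x) 0 * of_nat (card I) + (\<Sum>l = Suc 0..card I. coeff (GG I x) l * PS I x l)"
    by (simp add: sum.atLeast_Suc_atMost PS_0)
  finally show ?thesis using N by (simp add: field_simps)
qed

lemma rep_psum:
  fixes I :: "'i set" and X :: "real poly \<Rightarrow> (nat\<Rightarrow>real) \<Rightarrow> 'i \<Rightarrow> real"
  assumes finI: "finite I"
    and ra: "\<And>l. rep D (\<lambda>Q q. coeff (GG I (X Q q)) l)"
  shows "rep D (\<lambda>Q q. PS I (X Q q) s)"
proof (induction s rule: less_induct)
  case (less s)
  consider "s = 0" | "0 < s" "s < card I" | "card I \<le> s" by linarith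
  then show ?case
  proof cases
    case 1 then show ?thesis by (auto intro: rep_cong[OF rep_const] simp: PS_0)
  next
    case 2
    show ?thesis
      apply (rule rep_cong[OF _ PS_rec_low[OF finI 2]])
      apply (rule rep_diff)
       apply (rule rep_mult[OF rep_const ra])
      apply (rule rep_sum, simp)
      apply (rule rep_mult[OF ra])
      apply (rule less)
      using 2 by auto
  next
    case 3
    show ?thesis
      apply (rule rep_cong[OF _ PS_rec_high[OF finI 3]])
      apply (rule rep_uminus)
      apply (rule rep_sum, simp)
      apply (rule rep_mult[OF ra])
      apply (rule less)
      using 3 by auto
  qed
qed

lemma rep_GGcoeff:
  fixes I :: "'i set" and X :: "real poly \<Rightarrow> (nat\<Rightarrow>real) \<Rightarrow> 'i \<Rightarrow> real"
  assumes finI: "finite I"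
    and rp: "\<And>s. rep D (\<lambda>Q q. PS I (X Q q) s)"
  shows "rep D (\<lambda>Q q. coeff (GG I (X Q q)) l)"
proof (induction l rule: measure_induct_rule[where f="\<lambda>l. card I - l"])
  case (less l)
  consider "card I < l" | "l = card I" | "0 < l" "l < card I" | "l = 0" "0 < card I" by linarith
  then show ?case
  proof cases
    case 1 then show ?thesis by (auto intro: rep_cong[OF rep_const] simp: GG_high[OF finI])
  next
    case 2 then show ?thesis by (auto intro: rep_cong[OF rep_const] simp: GG_lead[OF finI])
  next
    case 3
    show ?thesis
      apply (rule rep_cong[OF _ GG_rec_mid[OF finI 3]])
      apply (rule rep_divide)
        apply (rule rep_sum, simp)
        apply (rule rep_mult[OF _ rp])
        apply (rule less)
      using 3 by (auto intro: rep_const)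
  next
    case 4
    show ?thesis unfolding 4(1)
      apply (rule rep_cong[OF _ GG_rec_0[OF finI 4(2)]])
      apply (rule rep_divide)
        apply (rule rep_uminus)
        apply (rule rep_sum, simp)
        apply (rule rep_mult[OF _ rp])
        apply (rule less)
      using 4 by (auto intro: rep_const)
  qed
qed



lemma mpr_poly: "poly (map_poly complex_of_real p) (of_real x) = of_real (poly p x)"
  by (induct p) (simp_all add: map_poly_pCons)
lemma mpr_mult: "map_poly complex_of_real (p * q) = map_poly of_real p * map_poly of_real q"
  by (rule poly_eqI) (simp add: coeff_map_poly coeff_mult)

lemma real_split:
  assumes "all_roots_real Q"
  shows "\<exists>L. Q = Polynomial.smult (lead_coeff Q) (\<Prod>a\<leftarrow>L. [:-a,1:])"
  using assms
proof (induction "degree Q" arbitrary: Q)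
  case 0
  have "Q = [:coeff Q 0:]" using degree_0_id[OF 0(1)[symmetric]] by simp
  then have "Q = Polynomial.smult (lead_coeff Q) (\<Prod>a\<leftarrow>[]. [:-a,1:])" using 0(1) by (simp add: smult_one)
  then show ?case by blast
next
  case (Suc d)
  have Q0: "Q \<noteq> 0" using Suc.prems unfolding all_roots_real_def by simp
  have "degree (map_poly complex_of_real Q) \<noteq> 0" using Suc.hyps(2) by (simp add: degree_map_poly)
  then have "\<not> constant (poly (map_poly complex_of_real Q))" by (simp add: constant_degree)
  then obtain z where z: "poly (map_poly complex_of_real Q) z = 0" using fundamental_theorem_of_algebra by blast
  then have "z \<in> \<real>" using Suc.prems unfolding all_roots_real_def by simp
  then obtain a where a: "z = of_real a" by (auto elim: Reals_cases)
  have "poly Q a = 0" using z unfolding a mpr_poly by simp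
  then obtain Q1 where Q1: "Q = [:-a,1:] * Q1" using poly_eq_0_iff_dvd by (metis dvdE)
  have Q10: "Q1 \<noteq> 0" using Q0 Q1 by auto
  have "degree ([:-a,1:] * Q1) = degree [:-a,1:] + degree Q1" by (rule degree_mult_eq) (use Q10 in auto)
  then have dQ1: "degree Q = Suc (degree Q1)" using Q1 by simp
  have "all_roots_real Q1"
    unfolding all_roots_real_def
  proof (intro conjI allI impI Q10)
    fix w assume "poly (map_poly complex_of_real Q1) w = 0"
    then have "poly (map_poly complex_of_real Q) w = 0" unfolding Q1 mpr_mult by simp
    then show "w \<in> \<real>" using Suc.prems unfolding all_roots_real_def by simp
  qed
  then obtain L where L: "Q1 = Polynomial.smult (lead_coeff Q1) (\<Prod>a\<leftarrow>L. [:-a,1:])"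
    using Suc.hyps(1)[of Q1] Suc.hyps(2) dQ1 by auto
  have "lead_coeff Q = lead_coeff Q1" unfolding Q1 lead_coeff_mult by simp
  then show ?case
  proof (intro exI[of _ "a # L"])
    have "Q = [:-a,1:] * Polynomial.smult (lead_coeff Q1) (\<Prod>a\<leftarrow>L. [:-a,1:])" using Q1 L by simp
    also have "\<dots> = Polynomial.smult (lead_coeff Q) ([:-a,1:] * (\<Prod>a\<leftarrow>L. [:-a,1:]))"
      unfolding \<open>lead_coeff Q = lead_coeff Q1\<close> by (rule mult_smult_right)
    finally show "Q = Polynomial.smult (lead_coeff Q) (\<Prod>a\<leftarrow>a # L. [:-a,1:])" by simp
  qed
qed

declare mult_pCons_left[simp del]

lemma dvd_sqfree: "(\<Prod>a\<leftarrow>L. [:-a,1:]) dvd (\<Prod>a\<in>set L. [:-a,1:]) * pderiv (\<Prod>a\<leftarrow>L. [:-a,1::real:])"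
proof (induction L)
  case Nil then show ?case by simp
next
  case (Cons a L)
  define QL where "QL = (\<Prod>a\<leftarrow>L. [:-a,1::real:])"
  define FL where "FL = (\<Prod>a\<in>set L. [:-a,1::real:])"
  have d: "pderiv ([:-a,1:] * QL) = QL + [:-a,1:] * pderiv QL"
    unfolding pderiv_mult by (simp add: pderiv_pCons)
  have IH: "QL dvd FL * pderiv QL" using Cons unfolding QL_def FL_def .
  have QC: "(\<Prod>b\<leftarrow>a#L. [:-b,1:]) = [:-a,1:] * QL" unfolding QL_def by simp
  show ?case
  proof (cases "a \<in> set L")
    case True
    define R where "R = (\<Prod>b\<in>set L - {a}. [:-b,1::real:])"
    then have F: "FL = [:-a,1:] * R"
      unfolding FL_def using True by (simp add: prod.remove)
    have "[:-a,1:] * QL dvd FL * (QL + [:-a,1:] * pderiv QL)"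
      unfolding distrib_left
    proof (rule dvd_add)
      have eq1: "FL * QL = ([:-a,1:] * QL) * R" unfolding F by (simp only: ac_simps)
      show "[:-a,1:] * QL dvd FL * QL" unfolding eq1 by (rule dvd_triv_left)
      have "FL * ([:-a,1:] * pderiv QL) = [:-a,1:] * (FL * pderiv QL)" by (simp only: ac_simps)
      then show "[:-a,1:] * QL dvd FL * ([:-a,1:] * pderiv QL)"
        using mult_dvd_mono[OF dvd_refl[of "[:-a,1:]"] IH] by simp
    qed
    moreover have "set (a # L) = set L" using True by auto
    ultimately show ?thesis using d unfolding QC FL_def by simp
  next
    case False
    have "QL dvd FL * QL + [:-a,1:] * (FL * pderiv QL)"
      by (rule dvd_add) (use IH in \<open>auto intro: dvd_mult\<close>)
    then have "[:-a,1:] * QL dvd [:-a,1:] * (FL * QL + [:-a,1:] * (FL * pderiv QL))"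
      by (rule mult_dvd_mono[OF dvd_refl])
    moreover have "(\<Prod>b\<in>set (a # L). [:-b,1:]) = [:-a,1:] * FL"
      using False unfolding FL_def by simp
    moreover have "([:-a,1:] * FL) * (QL + [:-a,1:] * pderiv QL) = [:-a,1:] * (FL * QL + [:-a,1:] * (FL * pderiv QL))"
      by (simp only: distrib_left ac_simps)
    ultimately show ?thesis using d unfolding QC by simp
  qed
qed

lemma key_root:
  fixes Q f b :: "real poly"
  assumes Q0: "Q \<noteq> 0" and a: "poly Q a = 0" and eq: "f * pderiv Q = b * Q" and d0: "pderiv Q \<noteq> 0"
  shows "poly f a = 0"
proof (cases "f = 0")
  case False
  then have n1: "f * pderiv Q \<noteq> 0" using d0 by simp
  then have n2: "b * Q \<noteq> 0" using eq by simp
  have "Polynomial.order a f + Polynomial.order a (pderiv Q) = Polynomial.order a b + Polynomial.order a Q"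
    using order_mult[OF n1, of a] order_mult[OF n2, of a] eq by simp
  moreover have "Polynomial.order a Q = Suc (Polynomial.order a (pderiv Q))" by (rule order_pderiv[OF Q0 a])
  ultimately have "Polynomial.order a f \<noteq> 0" by simp
  then show ?thesis using order_root by blast
qed simp

declare mult_pCons_left[simp]



definition DD :: "nat \<Rightarrow> nat \<Rightarrow> real poly \<Rightarrow> (nat \<Rightarrow> real) \<Rightarrow> bool" where
  "DD n m Q q \<longleftrightarrow> all_roots_real Q \<and> degree Q = n \<and> (\<forall>i j. i < j \<and> j < m \<longrightarrow> q i < q j)
      \<and> {x. poly Q x = 0} = q ` {..<m}"

lemma sum_split_add: fixes a k :: nat and f :: "nat \<Rightarrow> 'a::comm_monoid_add" shows "(\<Sum>j<a+k. f j) = (\<Sum>j<a. f j) + (\<Sum>j<k. f (a+j))"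
  by (induct k) (simp_all add: ac_simps)

lemma lincomb: fixes p :: "real poly" shows "(\<Sum>j<k. c j * coeff (Polynomial.monom 1 j * p) s) = coeff ((\<Sum>j<k. Polynomial.monom (c j) j) * p) s"
  by (auto simp: coeff_sum sum_distrib_right coeff_monom_mult intro!: sum.cong)

lemma coeff_lowsum: "j < k \<Longrightarrow> coeff (\<Sum>i<k. Polynomial.monom (c i) i) j = c j"
  by (simp add: coeff_sum coeff_monom)

lemma degree_lowsum: "degree (\<Sum>i<k. Polynomial.monom (c i :: real) i) \<le> k - 1"
  by (rule degree_sum_le) (auto intro: order_trans[OF degree_monom_le])

lemma poly_prodlist_0: "poly (\<Prod>a\<leftarrow>L. [:-a,1::real:]) x = 0 \<longleftrightarrow> x \<in> set L"
  by (induct L) auto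

lemma DD_facts:
  assumes D: "DD n m Q q" and m: "1 \<le> m"
  shows "Q \<noteq> 0" "inj_on q {..<m}" "pderiv Q \<noteq> 0" "1 \<le> n"
    "\<exists>B. GG {..<m} q * pderiv Q = Q * B \<and> degree B < m"
proof -
  have rr: "all_roots_real Q" and dQ: "degree Q = n" and mono: "\<And>i j. i < j \<Longrightarrow> j < m \<Longrightarrow> q i < q j"
    and roots: "{x. poly Q x = 0} = q ` {..<m}" using D unfolding DD_def by auto
  show Q0: "Q \<noteq> 0" using rr unfolding all_roots_real_def by simp
  show inj: "inj_on q {..<m}"
    unfolding inj_on_def by (metis lessThan_iff linorder_neqE_nat mono order_less_irrefl)
  have "q 0 \<in> {x. poly Q x = 0}" using roots m by auto
  then have "poly Q (q 0) = 0" by simp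
  then have "degree Q \<noteq> 0" using Q0 by (metis degree_0_id pCons_eq_0_iff poly_pCons mult_eq_0_iff poly_0 add.right_neutral)
  then show n1: "1 \<le> n" using dQ by simp
  show d0: "pderiv Q \<noteq> 0" using pderiv_eq_0_iff[of Q] n1 dQ by simp
  obtain L where L: "Q = Polynomial.smult (lead_coeff Q) (\<Prod>a\<leftarrow>L. [:-a,1:])" using real_split[OF rr] by blast
  have lc: "lead_coeff Q \<noteq> 0" using Q0 by simp
  have pQ: "poly Q x = lead_coeff Q * poly (\<Prod>a\<leftarrow>L. [:-a,1:]) x" for x
    by (subst (1) L) simp
  have "set L = {x. poly Q x = 0}"
    unfolding pQ using lc poly_prodlist_0 by auto
  then have setL: "set L = q ` {..<m}" using roots by simp
  have F: "GG {..<m} q = (\<Prod>a\<in>set L. [:-a,1:])"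
    unfolding GG_def setL by (simp add: prod.reindex[OF inj])
  obtain K where K: "(\<Prod>a\<in>set L. [:-a,1:]) * pderiv (\<Prod>a\<leftarrow>L. [:-a,1::real:]) = (\<Prod>a\<leftarrow>L. [:-a,1:]) * K"
    using dvd_sqfree[of L] by (auto elim: dvdE)
  have eq: "GG {..<m} q * pderiv Q = Q * K"
    unfolding F by (subst (1 2) L) (simp add: pderiv_smult K)
  have GG0: "GG {..<m} q \<noteq> 0" unfolding GG_def by auto
  have dGG: "degree (GG {..<m} q) = m" using GG_degree[of "{..<m}" q] by simp
  have K0: "K \<noteq> 0" using eq GG0 d0 by auto
  have "degree (GG {..<m} q * pderiv Q) = m + (n - 1)"
    using GG0 d0 dGG dQ by (simp add: degree_mult_eq degree_pderiv)
  moreover have "degree (Q * K) = n + degree K" using Q0 K0 dQ by (simp add: degree_mult_eq)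
  ultimately have "degree K < m" using eq n1 by simp
  then show "\<exists>B. GG {..<m} q * pderiv Q = Q * B \<and> degree B < m" using eq by blast
qed



lemma rep_coeff_pderiv: "rep D (\<lambda>Q q. coeff (pderiv Q) k)"
  by (rule rep_cong[OF rep_mult[OF rep_const rep_coeff]]) (simp add: coeff_pderiv)

lemma rep_cmq: "rep D (\<lambda>Q q. coeff (Polynomial.monom 1 j * Q) s)"
  by (cases "s < j") (auto simp: coeff_monom_mult intro: rep_cong[OF rep_const] rep_cong[OF rep_coeff])

lemma rep_cmqd: "rep D (\<lambda>Q q. coeff (Polynomial.monom 1 j * pderiv Q) s)"
  by (cases "s < j") (auto simp: coeff_monom_mult intro: rep_cong[OF rep_const] rep_cong[OF rep_coeff_pderiv])

lemma lowsum_eq: "degree (p::real poly) < m \<Longrightarrow> (\<Sum>j<m. Polynomial.monom (coeff p j) j) = p"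
  using poly_as_sum_of_monoms'[of p "m - 1"]
  by (cases m) (auto simp: lessThan_Suc_atMost)

lemma rep_F:
  assumes m: "1 \<le> m"
  shows "rep (DD n m) (\<lambda>Q q. coeff (GG {..<m} q) l)"
proof (cases "m \<le> l")
  case True
  then show ?thesis
    by (cases "l = m") (auto intro: rep_cong[OF rep_const] simp: GG_lead[of "{..<m}", simplified] GG_high[of "{..<m}", simplified])
next
  case False
  define A where "A Q q s j = (if j < m then coeff (Polynomial.monom 1 j * pderiv Q) s else - coeff (Polynomial.monom 1 (j - m) * Q) s)" for Q :: "real poly" and q :: "nat \<Rightarrow> real" and s j
  define b where "b Q q s = - coeff (Polynomial.monom 1 m * pderiv Q) s" for Q :: "real poly" and q :: "nat \<Rightarrow> real" and s
  define Bof where "Bof Q q = (SOME B. GG {..<m} q * pderiv Q = Q * B \<and> degree B < m)" for Q :: "real poly" and q :: "nat \<Rightarrow> real"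
  define z where "z Q q j = (if j < m then coeff (GG {..<m} q) j else coeff (Bof Q q) (j - m))" for Q q j
  have "rep (DD n m) (\<lambda>Q q. z Q q l)"
  proof (rule rep_lsq[where r = "n + m" and c = "m + m" and A = A and b = b])
    fix i j assume "i < n + m" "j < m + m"
    show "rep (DD n m) (\<lambda>Q q. A Q q i j)"
      unfolding A_def by (cases "j < m") (auto intro: rep_cmq rep_cmqd rep_uminus)
  next
    fix i assume "i < n + m"
    show "rep (DD n m) (\<lambda>Q q. b Q q i)" unfolding b_def by (intro rep_uminus rep_cmqd)
  next
    fix Q q i assume D: "DD n m Q q" and i: "i < n + m"
    note F = DD_facts[OF D m]
    have B: "GG {..<m} q * pderiv Q = Q * Bof Q q \<and> degree (Bof Q q) < m"
      unfolding Bof_def by (rule someI_ex) (rule F(5))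
    define FF where "FF = GG {..<m} q"
    have dF: "degree FF = m" unfolding FF_def using GG_degree[of "{..<m}" q] by simp
    have lF: "coeff FF m = 1" unfolding FF_def using GG_lead[of "{..<m}" q] by simp
    have Flow: "(\<Sum>j<m. Polynomial.monom (coeff FF j) j) = FF - Polynomial.monom 1 m"
      using poly_as_sum_of_monoms'[of FF m] dF lF by (simp add: lessThan_Suc_atMost[symmetric])
    have "(\<Sum>j<m + m. A Q q i j * z Q q j) = (\<Sum>j<m. coeff FF j * coeff (Polynomial.monom 1 j * pderiv Q) i)
          - (\<Sum>j<m. coeff (Bof Q q) j * coeff (Polynomial.monom 1 j * Q) i)"
      unfolding sum_split_add A_def z_def FF_def by (simp add: sum_negf[symmetric] ac_simps)
    also have "\<dots> = coeff ((FF - Polynomial.monom 1 m) * pderiv Q) i - coeff (Bof Q q * Q) i"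
      unfolding lincomb Flow lowsum_eq[OF conjunct2[OF B]] ..
    also have "\<dots> = coeff (FF * pderiv Q - Q * Bof Q q) i - coeff (Polynomial.monom 1 m * pderiv Q) i"
      by (simp add: algebra_simps del: mult_pCons_left)
    also have "\<dots> = b Q q i" using B unfolding FF_def b_def by simp
    finally show "(\<Sum>j<m + m. A Q q i j * z Q q j) = b Q q i" .
  next
    fix Q q v j
    assume D: "DD n m Q q" and hv: "\<And>i. i < n + m \<Longrightarrow> (\<Sum>j<m + m. A Q q i j * v j) = 0" and j: "j < m + m"
    note F = DD_facts[OF D m]
    have dQ: "degree Q = n" and roots: "{x. poly Q x = 0} = q ` {..<m}" using D unfolding DD_def by auto
    define fv where "fv = (\<Sum>j<m. Polynomial.monom (v j) j)"
    define bv where "bv = (\<Sum>j<m. Polynomial.monom (v (m + j)) j)"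
    have cf: "coeff (fv * pderiv Q - bv * Q) i = (\<Sum>j<m + m. A Q q i j * v j)" for i
    proof -
      have "(\<Sum>j<m + m. A Q q i j * v j) = (\<Sum>j<m. v j * coeff (Polynomial.monom 1 j * pderiv Q) i)
           - (\<Sum>j<m. v (m + j) * coeff (Polynomial.monom 1 j * Q) i)"
        unfolding sum_split_add A_def by (simp add: sum_negf[symmetric] ac_simps)
      also have "\<dots> = coeff (fv * pderiv Q) i - coeff (bv * Q) i"
        unfolding lincomb fv_def bv_def ..
      finally show ?thesis by simp
    qed
    have dfv: "degree fv \<le> m - 1" unfolding fv_def by (rule degree_lowsum)
    have dbv: "degree bv \<le> m - 1" unfolding bv_def by (rule degree_lowsum)
    have "degree (fv * pderiv Q - bv * Q) \<le> max (degree (fv * pderiv Q)) (degree (bv * Q))"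
      by (rule degree_diff_le_max)
    also have "\<dots> \<le> max (degree fv + degree (pderiv Q)) (degree bv + degree Q)"
      by (intro max.mono degree_mult_le)
    also have "\<dots> < n + m" using dfv dbv dQ F(4) m by (simp add: degree_pderiv, linarith)
    finally have dd: "degree (fv * pderiv Q - bv * Q) < n + m" .
    have "fv * pderiv Q - bv * Q = 0"
    proof (rule poly_eqI)
      fix i show "coeff (fv * pderiv Q - bv * Q) i = coeff 0 i"
        using hv[of i] cf[of i] dd coeff_eq_0[of "fv * pderiv Q - bv * Q" i] by (cases "i < n + m") auto
    qed
    then have eq: "fv * pderiv Q = bv * Q" by simp
    have fv0: "fv = 0"
    proof (rule ccontr)
      assume nz: "fv \<noteq> 0"
      have "q ` {..<m} \<subseteq> {x. poly fv x = 0}"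
        using key_root[OF F(1) _ eq F(3)] roots by auto
      then have "card (q ` {..<m}) \<le> card {x. poly fv x = 0}"
        by (rule card_mono[OF poly_roots_finite[OF nz]])
      also have "\<dots> \<le> degree fv" by (rule card_poly_roots_bound[OF nz])
      finally show False using card_image[OF F(2)] dfv m by simp
    qed
    then have "bv * Q = 0" using eq by simp
    then have bv0: "bv = 0" using F(1) by simp
    show "v j = 0"
    proof (cases "j < m")
      case True then show ?thesis using coeff_lowsum[OF True, of v] fv0 unfolding fv_def by simp
    next
      case False
      then have "j - m < m" using j by simp
      from coeff_lowsum[OF this, of "\<lambda>i. v (m + i)"] show ?thesis using bv0 False unfolding bv_def by simp
    qed
  next
    show "l < m + m" using False by simp
  qed
  then show ?thesis by (rule rep_cong) (use False in \<open>simp add: z_def\<close>)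
qed



lemma finite_pairs: "finite (pairs m)"
  by (rule finite_subset[of _ "{..<m} \<times> {..<m}"]) (auto simp: pairs_def)

lemma pairs_half:
  fixes g :: "nat \<Rightarrow> nat \<Rightarrow> real"
  assumes sym: "\<And>i j. g i j = g j i" and diag: "\<And>i. g i i = 0"
  shows "(\<Sum>i<m. \<Sum>j<m. g i j) = 2 * (\<Sum>(i,j)\<in>pairs m. g i j)"
proof -
  have U1: "{..<m}\<times>{..<m} \<subseteq> pairs m \<union> (prod.swap ` pairs m \<union> (\<lambda>i. (i,i)) ` {..<m})"
  proof
    fix p assume "p \<in> {..<m}\<times>{..<m}"
    then obtain a b where p: "p = (a,b)" "a < m" "b < m" by auto
    consider "a < b" | "b < a" | "a = b" by linarith
    then show "p \<in> pairs m \<union> (prod.swap ` pairs m \<union> (\<lambda>i. (i,i)) ` {..<m})"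
    proof cases
      case 2 then have "(b,a) \<in> pairs m" using p by (auto simp: pairs_def)
      then show ?thesis using p by (auto intro!: image_eqI[of _ _ "(b,a)"])
    qed (use p in \<open>auto simp: pairs_def\<close>)
  qed
  have U2: "pairs m \<union> (prod.swap ` pairs m \<union> (\<lambda>i. (i,i)) ` {..<m}) \<subseteq> {..<m}\<times>{..<m}"
    by (auto simp: pairs_def)
  have U: "{..<m}\<times>{..<m} = pairs m \<union> (prod.swap ` pairs m \<union> (\<lambda>i. (i,i)) ` {..<m})"
    using U1 U2 by (rule equalityI)
  have fin: "finite (pairs m)" by (rule finite_pairs)
  have d1: "pairs m \<inter> (prod.swap ` pairs m \<union> (\<lambda>i. (i,i)) ` {..<m}) = {}" by (auto simp: pairs_def)
  have d2: "prod.swap ` pairs m \<inter> (\<lambda>i. (i,i)) ` {..<m} = {}" by (auto simp: pairs_def)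
  have "(\<Sum>i<m. \<Sum>j<m. g i j) = (\<Sum>(i,j)\<in>{..<m}\<times>{..<m}. g i j)" by (simp add: sum.cartesian_product)
  also have "\<dots> = (\<Sum>(i,j)\<in>pairs m. g i j) + ((\<Sum>(i,j)\<in>prod.swap ` pairs m. g i j) + (\<Sum>(i,j)\<in>(\<lambda>i. (i,i)) ` {..<m}. g i j))"
    unfolding U using fin d1 d2 by (simp add: sum.union_disjoint)
  also have "(\<Sum>(i,j)\<in>prod.swap ` pairs m. g i j) = (\<Sum>(i,j)\<in>pairs m. g i j)"
    by (subst sum.reindex) (auto simp: sym intro!: sum.cong)
  also have "(\<Sum>(i,j)\<in>(\<lambda>i. (i,i)) ` {..<m}. g i j) = 0"
    by (subst sum.reindex) (auto simp: inj_on_def diag)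
  finally show ?thesis by simp
qed

lemma aux3: "(\<Sum>i\<in>A. \<Sum>j\<in>B. c * (f i * g j)) = c * (\<Sum>i\<in>A. f i) * (\<Sum>j\<in>B. g j :: real)"
proof -
  have "c * (\<Sum>i\<in>A. f i) * (\<Sum>j\<in>B. g j) = c * ((\<Sum>i\<in>A. f i) * (\<Sum>j\<in>B. g j))" by (rule mult.assoc)
  also have "\<dots> = c * (\<Sum>i\<in>A. \<Sum>j\<in>B. f i * g j)" by (simp only: sum_product)
  also have "\<dots> = (\<Sum>i\<in>A. \<Sum>j\<in>B. c * (f i * g j))" by (simp only: sum_distrib_left)
  finally show ?thesis by (rule sym)
qed

lemma pair_ps:
  fixes q :: "nat \<Rightarrow> real"
  assumes s: "1 \<le> s"
  shows "PS (pairs m) (\<lambda>(i,j). (q i - q j)^2) s =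
    (\<Sum>k\<le>2*s. of_nat (2*s choose k) * (-1)^(2*s-k) * PS {..<m} q k * PS {..<m} q (2*s-k)) / 2"
proof -
  have "2 * PS (pairs m) (\<lambda>(i,j). (q i - q j)^2) s = 2 * (\<Sum>(i,j)\<in>pairs m. (q i - q j)^(2*s))"
    unfolding PS_def by (simp add: case_prod_unfold power_mult)
  also have "\<dots> = (\<Sum>i<m. \<Sum>j<m. (q i - q j)^(2*s))"
    by (rule pairs_half[symmetric]) (use s in \<open>auto simp: power_mult power2_commute\<close>)
  also have "\<dots> = (\<Sum>i<m. \<Sum>j<m. \<Sum>k\<le>2*s. of_nat (2*s choose k) * (-1)^(2*s-k) * (q i^k * q j^(2*s-k)))"
    unfolding diff_conv_add_uminus binomial_ring
    by (simp add: power_minus[of "q _"] ac_simps)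
  also have "\<dots> = (\<Sum>k\<le>2*s. \<Sum>i<m. \<Sum>j<m. of_nat (2*s choose k) * (-1)^(2*s-k) * (q i^k * q j^(2*s-k)))"
    by (rule trans[OF sum.cong[OF refl sum.swap] sum.swap])
  also have "\<dots> = (\<Sum>k\<le>2*s. of_nat (2*s choose k) * (-1)^(2*s-k) * PS {..<m} q k * PS {..<m} q (2*s-k))"
    unfolding PS_def by (rule sum.cong[OF refl], rule aux3)
  finally show ?thesis by simp
qed



lemma poly_le: fixes p :: "real poly" assumes "degree p \<le> K" shows "poly p x = (\<Sum>l\<le>K. coeff p l * x^l)"
  unfolding poly_altdef
  by (rule sum.mono_neutral_left) (use assms in \<open>auto simp: coeff_eq_0\<close>)

lemma logderiv:
  fixes x :: "'i \<Rightarrow> real"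
  assumes fin: "finite I" and nz: "\<And>i. i \<in> I \<Longrightarrow> x i \<noteq> c"
  shows "poly (pderiv (GG I x)) c = poly (GG I x) c * (\<Sum>i\<in>I. inverse (c - x i))"
proof -
  have "poly (pderiv (GG I x)) c = (\<Sum>i\<in>I. \<Prod>j\<in>I - {i}. (c - x j))"
    unfolding GG_def pderiv_prod by (simp add: pderiv_pCons poly_sum poly_prod)
  also have "\<dots> = (\<Sum>i\<in>I. (\<Prod>j\<in>I. (c - x j)) * inverse (c - x i))"
  proof (rule sum.cong[OF refl])
    fix i assume i: "i \<in> I"
    have "(\<Prod>j\<in>I. (c - x j)) = (c - x i) * (\<Prod>j\<in>I - {i}. (c - x j))"
      using fin i by (simp add: prod.remove)
    then show "(\<Prod>j\<in>I - {i}. (c - x j)) = (\<Prod>j\<in>I. (c - x j)) * inverse (c - x i)"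
      using nz[OF i] by (simp add: field_simps)
  qed
  also have "\<dots> = poly (GG I x) c * (\<Sum>i\<in>I. inverse (c - x i))"
    unfolding GG_def by (simp add: poly_prod sum_distrib_left)
  finally show ?thesis .
qed

lemma rep_S:
  assumes m1: "1 \<le> m" and rc: "rep (DD n m) c"
    and nz: "\<And>Q q i j. DD n m Q q \<Longrightarrow> (i,j) \<in> pairs m \<Longrightarrow> (q i - q j)^2 \<noteq> c Q q"
  shows "rep (DD n m) (\<lambda>Q q. \<Sum>(i,j)\<in>pairs m. inverse ((q i - q j)^2 - c Q q))"
proof -
  define X where "X Q q = (\<lambda>(i,j). (q i - q j)^2 :: real)" for Q :: "real poly" and q :: "nat \<Rightarrow> real"
  have rps: "rep (DD n m) (\<lambda>Q q. PS {..<m} q s)" for s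
    using rep_psum[of "{..<m}" "DD n m" "\<lambda>Q q. q", OF _ rep_F[OF m1]] by simp
  have rpp: "rep (DD n m) (\<lambda>Q q. PS (pairs m) (X Q q) s)" for s
  proof (cases "s = 0")
    case True then show ?thesis by (auto intro: rep_cong[OF rep_const] simp: PS_0)
  next
    case False
    have "rep (DD n m) (\<lambda>Q q. (\<Sum>k\<le>2*s. of_nat (2*s choose k) * (-1)^(2*s-k) * PS {..<m} q k * PS {..<m} q (2*s-k)) / 2)"
      by (intro rep_divide rep_sum rep_mult rep_const rps) auto
    then show ?thesis
      by (rule rep_cong) (use False pair_ps in \<open>simp add: X_def\<close>)
  qed
  have rE: "rep (DD n m) (\<lambda>Q q. coeff (GG (pairs m) (X Q q)) l)" for l
    by (rule rep_GGcoeff[OF finite_pairs rpp])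
  define N where "N = card (pairs m)"
  have dE: "degree (GG (pairs m) (X Q q)) = N" for Q q
    unfolding N_def by (rule GG_degree[OF finite_pairs])
  have rpE: "rep (DD n m) (\<lambda>Q q. poly (GG (pairs m) (X Q q)) (c Q q))"
    by (rule rep_cong[where g="\<lambda>Q q. \<Sum>l\<le>N. coeff (GG (pairs m) (X Q q)) l * c Q q ^ l"])
       (auto intro!: rep_sum rep_mult rep_power rE rc poly_le simp: dE)
  have rpdE: "rep (DD n m) (\<lambda>Q q. poly (pderiv (GG (pairs m) (X Q q))) (c Q q))"
  proof (rule rep_cong[where g="\<lambda>Q q. \<Sum>l\<le>N. (of_nat (Suc l) * coeff (GG (pairs m) (X Q q)) (Suc l)) * c Q q ^ l"])
    show "rep (DD n m) (\<lambda>Q q. \<Sum>l\<le>N. (of_nat (Suc l) * coeff (GG (pairs m) (X Q q)) (Suc l)) * c Q q ^ l)"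
      by (auto intro!: rep_sum rep_mult rep_power rE rc rep_const)
  next
    fix Q q
    show "poly (pderiv (GG (pairs m) (X Q q))) (c Q q) = (\<Sum>l\<le>N. (of_nat (Suc l) * coeff (GG (pairs m) (X Q q)) (Suc l)) * c Q q ^ l)"
      by (subst poly_le[of _ N]) (auto simp: degree_pderiv dE coeff_pderiv)
  qed
  have key: "(\<Sum>(i,j)\<in>pairs m. inverse ((q i - q j)^2 - c Q q)) =
      - poly (pderiv (GG (pairs m) (X Q q))) (c Q q) / poly (GG (pairs m) (X Q q)) (c Q q)"
    and pnz: "poly (GG (pairs m) (X Q q)) (c Q q) \<noteq> 0" if D: "DD n m Q q" for Q q
  proof -
    have nz': "\<And>p. p \<in> pairs m \<Longrightarrow> X Q q p \<noteq> c Q q" using nz[OF D] unfolding X_def by auto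
    have nz2: "\<forall>p\<in>pairs m. c Q q - X Q q p \<noteq> 0" using nz' by (metis eq_iff_diff_eq_0)
    have "poly (GG (pairs m) (X Q q)) (c Q q) = (\<Prod>p\<in>pairs m. c Q q - X Q q p)"
      unfolding GG_def poly_prod by simp
    then show pnz: "poly (GG (pairs m) (X Q q)) (c Q q) \<noteq> 0"
      using nz2 finite_pairs by (simp add: prod_zero_iff)
    have "(\<Sum>(i,j)\<in>pairs m. inverse ((q i - q j)^2 - c Q q)) = - (\<Sum>p\<in>pairs m. inverse (c Q q - X Q q p))"
      unfolding X_def sum_negf[symmetric] by (rule sum.cong) (auto simp: inverse_minus_eq[symmetric])
    also have "\<dots> = - poly (pderiv (GG (pairs m) (X Q q))) (c Q q) / poly (GG (pairs m) (X Q q)) (c Q q)"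
      using logderiv[OF finite_pairs nz'] pnz by simp
    finally show "(\<Sum>(i,j)\<in>pairs m. inverse ((q i - q j)^2 - c Q q)) =
      - poly (pderiv (GG (pairs m) (X Q q))) (c Q q) / poly (GG (pairs m) (X Q q)) (c Q q)" .
  qed
  show ?thesis
    by (rule rep_cong[OF rep_divide[OF rep_uminus[OF rpdE] rpE pnz] key])
qed



lemma sum_gt_elem:
  fixes f :: "'a \<Rightarrow> real"
  assumes fin: "finite T" and p0: "p0 \<in> T" and p1: "p1 \<in> T" "p1 \<noteq> p0" and pos: "\<And>p. p \<in> T \<Longrightarrow> 0 < f p"
  shows "f p0 < sum f T"
proof -
  have "sum f T = f p0 + sum f (T - {p0})" using fin p0 by (simp add: sum.remove)
  moreover have "f p1 \<le> sum f (T - {p0})"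
    using p1 fin by (intro member_le_sum) (auto intro: less_imp_le pos)
  moreover have "0 < f p1" using pos p1 by simp
  ultimately show ?thesis by simp
qed

lemma inv_lt: fixes a S :: real assumes "0 < a" "inverse a < S" shows "inverse S < a"
  using less_imp_inverse_less[OF assms(2)] assms(1) by simp

lemma pairs_other: assumes m: "3 \<le> m" shows "\<exists>p1\<in>pairs m. p1 \<noteq> p0"
proof (cases "p0 = (0,1)")
  case True then show ?thesis using m by (intro bexI[of _ "(0,2)"]) (auto simp: pairs_def)
next
  case False then show ?thesis using m by (intro bexI[of _ "(0,1)"]) (auto simp: pairs_def)
qed

lemma dpos:
  fixes q :: "nat \<Rightarrow> real"
  assumes mono: "\<And>i j. i<j \<Longrightarrow> j<m \<Longrightarrow> q i < q j" and p: "(i,j) \<in> pairs m"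
  shows "0 < (q i - q j)^2" "0 < (q j - q i)^2"
proof -
  have "q i < q j" using p mono by (auto simp: pairs_def)
  then show "0 < (q i - q j)^2" "0 < (q j - q i)^2" by auto
qed

lemma part1_mu:
  fixes q :: "nat \<Rightarrow> real"
  assumes m3: "3 \<le> m" and mono: "\<And>i j. i<j \<Longrightarrow> j<m \<Longrightarrow> q i < q j"
  shows "0 < musq m q k \<and> (\<forall>(i,j)\<in>pairs m. musq m q k < (q i - q j)^2)"
proof (induction k)
  case 0
  let ?S = "\<Sum>(i,j)\<in>pairs m. inverse ((q i - q j)^2)"
  have pos: "0 < (case p of (i,j) \<Rightarrow> inverse ((q i - q j)^2))" if "p \<in> pairs m" for p
  proof -
    obtain i j where p: "p = (i,j)" by (cases p)
    show ?thesis using dpos[of m q i j, OF mono] that unfolding p by simp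
  qed
  have gt: "(case p0 of (i,j) \<Rightarrow> inverse ((q i - q j)^2)) < ?S" if "p0 \<in> pairs m" for p0
  proof -
    obtain p1 where p1: "p1 \<in> pairs m" "p1 \<noteq> p0" using pairs_other[OF m3] by blast
    show ?thesis by (rule sum_gt_elem[OF finite_pairs that p1]) (rule pos)
  qed
  have "(0,1) \<in> pairs m" using m3 by (auto simp: pairs_def)
  from gt[OF this] pos[OF this] have Spos: "0 < ?S" by (simp only: case_prod_conv)
  show ?case
  proof
    show "0 < musq m q 0" using Spos by simp
    show "\<forall>(i,j)\<in>pairs m. musq m q 0 < (q i - q j)^2"
    proof (clarify)
      fix i j assume ij: "(i,j) \<in> pairs m"
      have "inverse ((q i - q j)^2) < ?S" using gt[OF ij] by simp
      moreover have "0 < (q i - q j)^2" using dpos[of m q i j, OF mono ij] by simp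
      ultimately show "musq m q 0 < (q i - q j)^2"
        using Spos inv_lt by simp
    qed
  qed
next
  case (Suc k)
  define c where "c = musq m q k"
  let ?S = "\<Sum>(i,j)\<in>pairs m. inverse ((q i - q j)^2 - c)"
  have pos: "0 < (case p of (i,j) \<Rightarrow> inverse ((q i - q j)^2 - c))" if "p \<in> pairs m" for p
    using that Suc.IH unfolding c_def by auto
  have gt: "(case p0 of (i,j) \<Rightarrow> inverse ((q i - q j)^2 - c)) < ?S" if "p0 \<in> pairs m" for p0
  proof -
    obtain p1 where p1: "p1 \<in> pairs m" "p1 \<noteq> p0" using pairs_other[OF m3] by blast
    show ?thesis by (rule sum_gt_elem[OF finite_pairs that p1]) (rule pos)
  qed
  have "(0,1) \<in> pairs m" using m3 by (auto simp: pairs_def)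
  from gt[OF this] pos[OF this] have Spos: "0 < ?S" by (simp only: case_prod_conv)
  have ms: "musq m q (Suc k) = inverse ?S + c" unfolding c_def by simp
  show ?case
  proof
    have "0 < inverse ?S" using Spos by simp
    moreover have "0 < c" using Suc.IH unfolding c_def by simp
    ultimately show "0 < musq m q (Suc k)" unfolding ms by (rule add_pos_pos)
    show "\<forall>(i,j)\<in>pairs m. musq m q (Suc k) < (q i - q j)^2"
    proof (clarify)
      fix i j assume ij: "(i,j) \<in> pairs m"
      have "inverse ((q i - q j)^2 - c) < ?S" using gt[OF ij] by simp
      moreover have "0 < (q i - q j)^2 - c" using ij Suc.IH unfolding c_def by auto
      ultimately have "inverse ?S < (q i - q j)^2 - c"
        using inv_lt by blast
      then show "musq m q (Suc k) < (q i - q j)^2" unfolding ms by simp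
    qed
  qed
qed

lemma part1_M:
  fixes q :: "nat \<Rightarrow> real"
  assumes m3: "3 \<le> m" and mono: "\<And>i j. i<j \<Longrightarrow> j<m \<Longrightarrow> q i < q j"
  shows "\<forall>(i,j)\<in>pairs m. (q i - q j)^2 < Msq m q k"
proof (induction k)
  case 0
  have pos: "0 < (case p of (i,j) \<Rightarrow> (q j - q i)^2)" if "p \<in> pairs m" for p
  proof -
    obtain i j where p: "p = (i,j)" by (cases p)
    show ?thesis using dpos[of m q i j, OF mono] that unfolding p by simp
  qed
  show ?case
  proof (clarify)
    fix i j assume ij: "(i,j) \<in> pairs m"
    obtain p1 where p1: "p1 \<in> pairs m" "p1 \<noteq> (i,j)" using pairs_other[OF m3] by blast
    have "(case (i,j) of (i,j) \<Rightarrow> (q j - q i)^2) < (\<Sum>p\<in>pairs m. case p of (i,j) \<Rightarrow> (q j - q i)^2)"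
      by (rule sum_gt_elem[OF finite_pairs ij p1]) (rule pos)
    then have "(case (i,j) of (i,j) \<Rightarrow> (q j - q i)^2) < Msq m q 0" by simp
    then show "(q i - q j)^2 < Msq m q 0" by (simp add: power2_commute)
  qed
next
  case (Suc k)
  define c where "c = Msq m q k"
  let ?S = "\<Sum>(i,j)\<in>pairs m. inverse (c - (q i - q j)^2)"
  have pos: "0 < (case p of (i,j) \<Rightarrow> inverse (c - (q i - q j)^2))" if "p \<in> pairs m" for p
    using that Suc.IH unfolding c_def by auto
  have gt: "(case p0 of (i,j) \<Rightarrow> inverse (c - (q i - q j)^2)) < ?S" if "p0 \<in> pairs m" for p0
  proof -
    obtain p1 where p1: "p1 \<in> pairs m" "p1 \<noteq> p0" using pairs_other[OF m3] by blast
    show ?thesis by (rule sum_gt_elem[OF finite_pairs that p1]) (rule pos)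
  qed
  have "(0,1) \<in> pairs m" using m3 by (auto simp: pairs_def)
  from gt[OF this] pos[OF this] have Spos: "0 < ?S" by (simp only: case_prod_conv)
  have "(\<Sum>(i,j)\<in>pairs m. inverse ((q i - q j)^2 - c)) = - ?S"
    unfolding sum_negf[symmetric] by (rule sum.cong) (auto simp: inverse_minus_eq[symmetric])
  then have ms: "Msq m q (Suc k) = c - inverse ?S" unfolding c_def by simp
  show ?case
  proof (clarify)
    fix i j assume ij: "(i,j) \<in> pairs m"
    have "inverse (c - (q i - q j)^2) < ?S" using gt[OF ij] by simp
    moreover have "0 < c - (q i - q j)^2" using ij Suc.IH unfolding c_def by auto
    ultimately have "inverse ?S < c - (q i - q j)^2"
      using inv_lt by blast
    then show "(q i - q j)^2 < Msq m q (Suc k)" unfolding ms by simp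
  qed
qed



lemma pairs01: "3 \<le> m \<Longrightarrow> (0,1) \<in> pairs m"
  by (auto simp: pairs_def)

lemma rep_Msq0:
  assumes m1: "1 \<le> m"
  shows "rep (DD n m) (\<lambda>Q q. Msq m q 0)"
proof -
  have rps: "rep (DD n m) (\<lambda>Q q. PS {..<m} q s)" for s
    using rep_psum[of "{..<m}" "DD n m" "\<lambda>Q q. q", OF _ rep_F[OF m1]] by simp
  have "rep (DD n m) (\<lambda>Q q. (\<Sum>k\<le>2*1. of_nat (2*1 choose k) * (-1)^(2*1-k) * PS {..<m} q k * PS {..<m} q (2*1-k)) / 2)"
    by (intro rep_divide rep_sum rep_mult rep_const rps) auto
  moreover have "Msq m q 0 = PS (pairs m) (\<lambda>(i,j). (q i - q j)^2) 1" for q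
    unfolding PS_def by (simp add: case_prod_unfold power2_commute)
  ultimately show ?thesis
    using pair_ps[of 1] by (auto intro: rep_cong)
qed

lemma rep_musq:
  assumes m3: "3 \<le> m"
  shows "rep (DD n m) (\<lambda>Q q. musq m q k)"
proof (induction k)
  case 0
  have m1: "1 \<le> m" using m3 by simp
  have "rep (DD n m) (\<lambda>Q q. inverse (\<Sum>(i,j)\<in>pairs m. inverse ((q i - q j)^2 - (\<lambda>Q q. 0) Q q)))"
  proof (rule rep_inverse[OF rep_S[OF m1 rep_const]])
    fix Q q i j assume D: "DD n m Q q" and ij: "(i,j) \<in> pairs m"
    have mono: "\<And>i j. i<j \<Longrightarrow> j<m \<Longrightarrow> q i < q j" using D unfolding DD_def by auto
    show "(q i - q j)^2 \<noteq> 0" using dpos[of m q i j, OF mono ij] by simp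
  next
    fix Q q assume D: "DD n m Q q"
    have mono: "\<And>i j. i<j \<Longrightarrow> j<m \<Longrightarrow> q i < q j" using D unfolding DD_def by auto
    have "0 < musq m q 0" using part1_mu[where q=q and m=m, OF m3 mono] by blast
    then show "(\<Sum>(i,j)\<in>pairs m. inverse ((q i - q j)^2 - 0)) \<noteq> 0" by auto
  qed
  then show ?case by simp
next
  case (Suc k)
  have m1: "1 \<le> m" using m3 by simp
  have "rep (DD n m) (\<lambda>Q q. inverse (\<Sum>(i,j)\<in>pairs m. inverse ((q i - q j)^2 - musq m q k)) + musq m q k)"
  proof (rule rep_add[OF rep_inverse[OF rep_S[OF m1 Suc.IH]] Suc.IH])
    fix Q q i j assume D: "DD n m Q q" and ij: "(i,j) \<in> pairs m"
    have mono: "\<And>i j. i<j \<Longrightarrow> j<m \<Longrightarrow> q i < q j" using D unfolding DD_def by auto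
    show "(q i - q j)^2 \<noteq> musq m q k" using part1_mu[where q=q and m=m and k=k, OF m3 mono] ij by auto
  next
    fix Q q assume D: "DD n m Q q"
    have mono: "\<And>i j. i<j \<Longrightarrow> j<m \<Longrightarrow> q i < q j" using D unfolding DD_def by auto
    have "0 < (\<Sum>p\<in>pairs m. case p of (i,j) \<Rightarrow> inverse ((q i - q j)^2 - musq m q k))"
    proof (rule sum_pos[OF finite_pairs])
      show "pairs m \<noteq> {}" using pairs01[OF m3] by blast
      fix p assume "p \<in> pairs m"
      then show "0 < (case p of (i,j) \<Rightarrow> inverse ((q i - q j)^2 - musq m q k))"
        using part1_mu[where q=q and m=m and k=k, OF m3 mono] by (auto split: prod.splits)
    qed
    then show "(\<Sum>(i,j)\<in>pairs m. inverse ((q i - q j)^2 - musq m q k)) \<noteq> 0" by simp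
  qed
  then show ?case by simp
qed

lemma rep_Msq:
  assumes m3: "3 \<le> m"
  shows "rep (DD n m) (\<lambda>Q q. Msq m q k)"
proof (induction k)
  case 0
  show ?case by (rule rep_Msq0) (use m3 in simp)
next
  case (Suc k)
  have m1: "1 \<le> m" using m3 by simp
  have "rep (DD n m) (\<lambda>Q q. inverse (\<Sum>(i,j)\<in>pairs m. inverse ((q i - q j)^2 - Msq m q k)) + Msq m q k)"
  proof (rule rep_add[OF rep_inverse[OF rep_S[OF m1 Suc.IH]] Suc.IH])
    fix Q q i j assume D: "DD n m Q q" and ij: "(i,j) \<in> pairs m"
    have mono: "\<And>i j. i<j \<Longrightarrow> j<m \<Longrightarrow> q i < q j" using D unfolding DD_def by auto
    show "(q i - q j)^2 \<noteq> Msq m q k" using part1_M[where q=q and m=m and k=k, OF m3 mono] ij by auto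
  next
    fix Q q assume D: "DD n m Q q"
    have mono: "\<And>i j. i<j \<Longrightarrow> j<m \<Longrightarrow> q i < q j" using D unfolding DD_def by auto
    have "0 < (\<Sum>p\<in>pairs m. - (case p of (i,j) \<Rightarrow> inverse ((q i - q j)^2 - Msq m q k)))"
    proof (rule sum_pos[OF finite_pairs])
      show "pairs m \<noteq> {}" using pairs01[OF m3] by blast
      fix p assume "p \<in> pairs m"
      then show "0 < - (case p of (i,j) \<Rightarrow> inverse ((q i - q j)^2 - Msq m q k))"
        using part1_M[where q=q and m=m and k=k, OF m3 mono] by (auto split: prod.splits)
    qed
    then show "(\<Sum>(i,j)\<in>pairs m. inverse ((q i - q j)^2 - Msq m q k)) \<noteq> 0"
      by (simp add: sum_negf)
  qed
  then show ?case by simp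
qed

theorem mainTheorem6:
  fixes P :: "real poly" and m :: nat and p :: "nat \<Rightarrow> real"
  assumes real_roots: "all_roots_real P"
    and m3: "m \<ge> 3"
    and p_mono: "\<And>i j. i < j \<Longrightarrow> j < m \<Longrightarrow> p i < p j"
    and p_roots: "{x. poly P x = 0} = p ` {..<m}"
  shows "(\<forall>k. 0 < musq m p k
             \<and> sqrt (musq m p k) < Min {\<bar>p i - p j\<bar> | i j. i < m \<and> j < m \<and> i \<noteq> j}
             \<and> Max {\<bar>p i - p j\<bar> | i j. i < m \<and> j < m} < sqrt (Msq m p k))
       \<and> (\<forall>k. \<exists>R S :: rexp.
             \<forall>(Q :: real poly) (q :: nat \<Rightarrow> real).
               all_roots_real Q \<and> degree Q = degree P
               \<and> (\<forall>i j. i < j \<and> j < m \<longrightarrow> q i < q j)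
               \<and> {x. poly Q x = 0} = q ` {..<m}
               \<longrightarrow> reval R (coeff Q) = Some (musq m q k)
                 \<and> reval S (coeff Q) = Some (Msq m q k))"
proof
  show "\<forall>k. 0 < musq m p k
             \<and> sqrt (musq m p k) < Min {\<bar>p i - p j\<bar> | i j. i < m \<and> j < m \<and> i \<noteq> j}
             \<and> Max {\<bar>p i - p j\<bar> | i j. i < m \<and> j < m} < sqrt (Msq m p k)"
  proof
    fix k
    note mu = part1_mu[where q=p and m=m and k=k, OF m3 p_mono]
    note MM = part1_M[where q=p and m=m and k=k, OF m3 p_mono]
    have sq: "\<bar>p i - p j\<bar> = sqrt ((p i - p j)^2)" for i j by simp
    have pairs_sym: "(min i j, max i j) \<in> pairs m \<and> (p (min i j) - p (max i j))^2 = (p i - p j)^2"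
      if "i < m" "j < m" "i \<noteq> j" for i j
      using that by (cases "i < j") (auto simp: pairs_def min_def max_def power2_commute)
    define Smu where "Smu = {\<bar>p i - p j\<bar> | i j. i < m \<and> j < m \<and> i \<noteq> j}"
    define SM where "SM = {\<bar>p i - p j\<bar> | i j. i < m \<and> j < m}"
    have finSmu: "finite Smu"
      by (rule finite_subset[of _ "(\<lambda>(i,j). \<bar>p i - p j\<bar>) ` ({..<m} \<times> {..<m})"]) (auto simp: Smu_def)
    have finSM: "finite SM"
      by (rule finite_subset[of _ "(\<lambda>(i,j). \<bar>p i - p j\<bar>) ` ({..<m} \<times> {..<m})"]) (auto simp: SM_def)
    have "\<bar>p 0 - p 1\<bar> \<in> Smu" unfolding Smu_def using m3 by (intro CollectI exI[of _ 0] exI[of _ "1::nat"]) simp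
    then have neSmu: "Smu \<noteq> {}" by blast
    have "\<bar>p 0 - p 0\<bar> \<in> SM" unfolding SM_def using m3 by (intro CollectI exI[of _ 0] exI[of _ "0::nat"]) simp
    then have neSM: "SM \<noteq> {}" by blast
    obtain i j where ij: "i < m" "j < m" "i \<noteq> j" "Min Smu = \<bar>p i - p j\<bar>"
      using Min_in[OF finSmu neSmu] unfolding Smu_def by auto
    have "musq m p k < (p i - p j)^2" using mu pairs_sym[OF ij(1-3)] by auto
    then have A: "sqrt (musq m p k) < Min Smu" unfolding ij(4) sq by (rule real_sqrt_less_mono)
    obtain i' j' where ij': "i' < m" "j' < m" "Max SM = \<bar>p i' - p j'\<bar>"
      using Max_in[OF finSM neSM] unfolding SM_def by auto
    have "(0,1) \<in> pairs m" using m3 by (auto simp: pairs_def)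
    then have "(p 0 - p 1)^2 < Msq m p k" using MM by auto
    moreover have "0 \<le> (p 0 - p 1)^2" by simp
    ultimately have Mpos: "0 < Msq m p k" by linarith
    have B: "Max SM < sqrt (Msq m p k)"
    proof (cases "i' = j'")
      case True then show ?thesis using ij'(3) Mpos by simp
    next
      case False
      have "(p i' - p j')^2 < Msq m p k" using MM pairs_sym[OF ij'(1,2) False] by auto
      then show ?thesis unfolding ij'(3) sq by (rule real_sqrt_less_mono)
    qed
    show "0 < musq m p k
             \<and> sqrt (musq m p k) < Min {\<bar>p i - p j\<bar> | i j. i < m \<and> j < m \<and> i \<noteq> j}
             \<and> Max {\<bar>p i - p j\<bar> | i j. i < m \<and> j < m} < sqrt (Msq m p k)"
      unfolding Smu_def[symmetric] SM_def[symmetric] using conjunct1[OF mu] A B by (intro conjI)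
  qed
next
  show "\<forall>k. \<exists>R S :: rexp.
             \<forall>(Q :: real poly) (q :: nat \<Rightarrow> real).
               all_roots_real Q \<and> degree Q = degree P
               \<and> (\<forall>i j. i < j \<and> j < m \<longrightarrow> q i < q j)
               \<and> {x. poly Q x = 0} = q ` {..<m}
               \<longrightarrow> reval R (coeff Q) = Some (musq m q k)
                 \<and> reval S (coeff Q) = Some (Msq m q k)"
  proof
    fix k
    obtain R where R: "\<forall>Q q. DD (degree P) m Q q \<longrightarrow> reval R (coeff Q) = Some (musq m q k)"
      using rep_musq[OF m3, of "degree P" k] unfolding rep_def by blast
    obtain S where S: "\<forall>Q q. DD (degree P) m Q q \<longrightarrow> reval S (coeff Q) = Some (Msq m q k)"
      using rep_Msq[OF m3, of "degree P" k] unfolding rep_def by blast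
    show "\<exists>R S :: rexp.
             \<forall>(Q :: real poly) (q :: nat \<Rightarrow> real).
               all_roots_real Q \<and> degree Q = degree P
               \<and> (\<forall>i j. i < j \<and> j < m \<longrightarrow> q i < q j)
               \<and> {x. poly Q x = 0} = q ` {..<m}
               \<longrightarrow> reval R (coeff Q) = Some (musq m q k)
                 \<and> reval S (coeff Q) = Some (Msq m q k)"
    proof (rule exI[of _ R], rule exI[of _ S], intro allI impI)
      fix Q :: "real poly" and q :: "nat \<Rightarrow> real"
      assume "all_roots_real Q \<and> degree Q = degree P
               \<and> (\<forall>i j. i < j \<and> j < m \<longrightarrow> q i < q j)
               \<and> {x. poly Q x = 0} = q ` {..<m}"
      then have D: "DD (degree P) m Q q" unfolding DD_def .
      show "reval R (coeff Q) = Some (musq m q k) \<and> reval S (coeff Q) = Some (Msq m q k)"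
        using R S D by blast
    qed
  qed
qed


end
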